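(* Let $R$ be an Artinian multiplication ring. Then every multiplication $R$-module is an epimorphic image of the $R$-module $R$ (i.e., is cyclic).
   Context: All rings are commutative with $1$ and all modules are unital. A ring $R$ is a multiplication ring if whenever $I,J$ are ideals of $R$ with $J\subseteq I$, there is an ideal $I'$ of $R$ with $J=I'I$. An $R$-module $M$ is a multiplication module if every submodule of $M$ equals $IM$ for some ideal $I$ of $R$. *)

theory Defs
  imports Main "HOL.Modules"
begin

text \<open>The commutative ring R with 1 is a type of class comm_ring_1; an R-module is a type
  of class ab_group_add together with a scalar multiplication satisfying the locale module.\<close>

definition is_ideal :: "'a::comm_ring_1 set \<Rightarrow> bool" where
  "is_ideal I \<longleftrightarrow> module.subspace ((*) :: 'a \<Rightarrow> 'a \<Rightarrow> 'a) I"

definition ideal_mult :: "'a::comm_ring_1 set \<Rightarrow> 'a set \<Rightarrow> 'a set" where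
  "ideal_mult I J = module.span ((*) :: 'a \<Rightarrow> 'a \<Rightarrow> 'a) {a * b | a b. a \<in> I \<and> b \<in> J}"

definition multiplication_ring :: "'a::comm_ring_1 itself \<Rightarrow> bool" where
  "multiplication_ring (_ :: 'a itself) \<longleftrightarrow>
     (\<forall>I J :: 'a set. is_ideal I \<and> is_ideal J \<and> J \<subseteq> I \<longrightarrow>
        (\<exists>I'. is_ideal I' \<and> J = ideal_mult I' I))"

definition artinian_ring :: "'a::comm_ring_1 itself \<Rightarrow> bool" where
  "artinian_ring (_ :: 'a itself) \<longleftrightarrow>
     (\<forall>f :: nat \<Rightarrow> 'a set. (\<forall>n. is_ideal (f n)) \<and> (\<forall>n. f (Suc n) \<subseteq> f n) \<longrightarrow>
        (\<exists>N. \<forall>n\<ge>N. f n = f N))"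

definition ideal_smult ::
  "('a::comm_ring_1 \<Rightarrow> 'b::ab_group_add \<Rightarrow> 'b) \<Rightarrow> 'a set \<Rightarrow> 'b set \<Rightarrow> 'b set" where
  "ideal_smult scale I M = module.span scale {scale r m | r m. r \<in> I \<and> m \<in> M}"

definition multiplication_module ::
  "('a::comm_ring_1 \<Rightarrow> 'b::ab_group_add \<Rightarrow> 'b) \<Rightarrow> bool" where
  "multiplication_module scale \<longleftrightarrow>
     (\<forall>N. module.subspace scale N \<longrightarrow> (\<exists>I. is_ideal I \<and> N = ideal_smult scale I UNIV))"

end

theory Submission
  imports Defs
begin

lemma ring_module: "module ((*) :: 'a::comm_ring_1 \<Rightarrow> 'a \<Rightarrow> 'a)"
  by unfold_locales (auto simp: algebra_simps)

lemma is_ideal_iff: "is_ideal (I::'a::comm_ring_1 set) \<longleftrightarrow>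
   0 \<in> I \<and> (\<forall>x\<in>I. \<forall>y\<in>I. x+y \<in> I) \<and> (\<forall>c. \<forall>x\<in>I. c*x \<in> I)"
  unfolding is_ideal_def module.subspace_def[OF ring_module] by simp

lemma principal_ideal: "is_ideal {(e::'a::comm_ring_1) * t | t. True}"
proof -
  have a: "0 = e * 0" by simp
  have b: "e*x + e*y = e*(x+y)" for x y by (simp add: algebra_simps)
  have c: "c*(e*x) = e*(c*x)" for c x by (simp add: algebra_simps)
  show ?thesis unfolding is_ideal_iff using a b c by blast
qed

definition nilp :: "'a::comm_ring_1 \<Rightarrow> bool" where "nilp a \<longleftrightarrow> (\<exists>n. a^n = 0)"

lemma nilp_add: assumes "nilp a" "nilp b" shows "nilp (a+b)"
proof -
  obtain m n where m: "a^m = 0" and n: "b^n = 0" using assms nilp_def by blast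
  have "(a+b)^(m+n) = (\<Sum>k\<le>m+n. of_nat ((m+n) choose k) * a^k * b^(m+n-k))"
    by (rule binomial_ring)
  also have "\<dots> = 0"
  proof (rule sum.neutral, intro ballI)
    fix k assume "k \<in> {..m+n}"
    show "of_nat ((m+n) choose k) * a^k * b^(m+n-k) = 0"
    proof (cases "k \<ge> m")
      case True
      then have "k = m + (k-m)" by simp
      then have "a^k = a^m * a^(k-m)" by (metis power_add)
      then show ?thesis using m by simp
    next
      case False
      then have "m+n-k = n + (m-k)" by simp
      then have "b^(m+n-k) = b^n * b^(m-k)" by (metis power_add)
      then show ?thesis using n by simp
    qed
  qed
  finally show ?thesis unfolding nilp_def by blast
qed

lemma nilp_mult: "nilp a \<Longrightarrow> nilp (c*a)"
  unfolding nilp_def by (metis mult_zero_right power_mult_distrib)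

lemma artinianD:
  assumes "artinian_ring TYPE('a::comm_ring_1)" "\<forall>n. is_ideal ((f::nat \<Rightarrow> 'a set) n)" "\<forall>n. f (Suc n) \<subseteq> f n"
  shows "\<exists>N. \<forall>n\<ge>N. f n = f N"
  using assms unfolding artinian_ring_def by blast

lemma artinian_min:
  assumes art: "artinian_ring TYPE('a::comm_ring_1)" and I: "(I::'a set) \<in> F"
    and id: "\<forall>J\<in>F. is_ideal J"
  shows "\<exists>I\<in>F. \<forall>J\<in>F. J \<subseteq> I \<longrightarrow> J = I"
proof -
  define r where "r = {(J,I). is_ideal J \<and> is_ideal (I::'a set) \<and> J \<subset> I}"
  have "wf r"
  proof (rule ccontr)
    assume "\<not> wf r"
    then obtain f where f: "\<forall>i. (f (Suc i), f i) \<in> r" using wf_iff_no_infinite_down_chain by blast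
    have fi: "is_ideal (f n) \<and> f (Suc n) \<subset> f n" for n
      using f[rule_format, of n] unfolding r_def by simp
    then have "\<forall>n. is_ideal (f n)" "\<forall>n. f (Suc n) \<subseteq> f n" by blast+
    then obtain N where "\<forall>n\<ge>N. f n = f N" using artinianD[OF art] by blast
    then have "f (Suc N) = f N" by (metis le_SucI order_refl)
    with fi[of N] show False by simp
  qed
  then obtain z where z: "z \<in> F" "\<And>y. (y, z) \<in> r \<Longrightarrow> y \<notin> F"
    using wfE_min[OF _ I] by blast
  show ?thesis
  proof (rule bexI[OF _ z(1)], intro ballI impI, rule ccontr)
    fix J assume J: "J \<in> F" "J \<subseteq> z" "J \<noteq> z"
    then have "(J, z) \<in> r" using id z(1) unfolding r_def by blast
    then show False using z(2) J(1) by blast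
  qed
qed

lemma pi_regular:
  assumes art: "artinian_ring TYPE('a::comm_ring_1)"
  shows "\<exists>n s. n \<ge> 1 \<and> (r::'a)^n = r^(n+1)*s"
proof -
  define f where "f k = {r^k * t | t. True}" for k
  have "\<forall>n. is_ideal (f n)" unfolding f_def using principal_ideal by blast
  moreover have "\<forall>n. f (Suc n) \<subseteq> f n"
  proof
    fix n
    have "r^Suc n * t = r^n * (r*t)" for t by (simp add: algebra_simps)
    then show "f (Suc n) \<subseteq> f n" unfolding f_def by blast
  qed
  ultimately obtain N where N: "\<forall>n\<ge>N. f n = f N" using artinianD[OF art] by blast
  then have "f (N+2) = f (N+1)" by (metis le_add1)
  moreover have "r^(N+1) = r^(N+1) * 1" by simp
  then have "r^(N+1) \<in> f (N+1)" unfolding f_def by blast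
  ultimately have "r^(N+1) \<in> f (N+2)" by simp
  then obtain s where "r^(N+1) = r^(N+2) * s" unfolding f_def by blast
  then show ?thesis by (intro exI[of _ "N+1"] exI[of _ s]) simp
qed

lemma pi_idem:
  assumes "n \<ge> 1" "(r::'a::comm_ring_1)^n = r^(n+1)*s"
  shows "\<exists>f u. f*f = f \<and> f = r*u \<and> r^n = f * r^n"
proof -
  have k: "r^n = r^(n+k)*s^k" for k
  proof (induction k)
    case 0 then show ?case by simp
  next
    case (Suc k)
    have "r^(n+k) = r^k * r^n" by (simp add: power_add)
    also have "\<dots> = r^k * (r^(n+1)*s)" using assms(2) by simp
    also have "\<dots> = r^(n+Suc k) * s" by (simp add: power_add algebra_simps)
    finally have "r^(n+k) = r^(n+Suc k) * s" .
    then have "r^(n+k)*s^k = (r^(n+Suc k) * s) * s^k" by simp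
    also have "\<dots> = r^(n+Suc k) * s^(Suc k)" by (simp only: power_Suc mult.assoc)
    finally have "r^(n+k)*s^k = r^(n+Suc k) * s^(Suc k)" .
    then show ?case using Suc by simp
  qed
  define f where "f = r^n * s^n"
  have "f*f = (r^(n+n)*s^n)*s^n" unfolding f_def by (simp add: power_add mult_ac)
  also have "\<dots> = f" by (simp only: k[of n, symmetric] f_def)
  finally have 1: "f*f = f" .
  have 2: "f = r * (r^(n-1)*s^n)" unfolding f_def using assms(1)
    by (metis (no_types, lifting) le_add_diff_inverse mult.assoc plus_1_eq_Suc power_Suc)
  have "f * r^n = r^(n+n)*s^n" unfolding f_def by (simp add: power_add mult_ac)
  also have "\<dots> = r^n" by (rule k[of n, symmetric])
  finally have 3: "r^n = f * r^n" by simp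
  show ?thesis using 1 2 3 by blast
qed


definition cyc :: "('a::comm_ring_1 \<Rightarrow> 'b::ab_group_add \<Rightarrow> 'b) \<Rightarrow> 'a \<Rightarrow> bool" where
  "cyc scale e \<longleftrightarrow> (\<exists>g. scale e g = g \<and> (\<forall>w. scale e w = w \<longrightarrow> (\<exists>c. w = scale c g)))"

lemma cyc_split:
  fixes scale :: "'a::comm_ring_1 \<Rightarrow> 'b::ab_group_add \<Rightarrow> 'b"
  assumes mod: "module scale" and ee: "e*e = e" and ff: "f*f = f" and fe: "f*e = f"
    and Pf: "cyc scale f" and Pef: "cyc scale (e - f)"
  shows "cyc scale e"
proof -
  interpret module scale by fact
  obtain g1 where g1: "scale f g1 = g1" "\<And>w. scale f w = w \<Longrightarrow> \<exists>c. w = scale c g1"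
    using Pf unfolding cyc_def by blast
  obtain g2 where g2: "scale (e-f) g2 = g2" "\<And>w. scale (e-f) w = w \<Longrightarrow> \<exists>c. w = scale c g2"
    using Pef unfolding cyc_def by blast
  have ef: "e*f = f" using fe by (simp add: mult.commute)
  have e1: "scale e g1 = g1" using g1(1) ef by (metis scale_scale)
  have e2: "e*(e-f) = e - f" using ee ef by (simp add: algebra_simps)
  have e2': "scale e g2 = g2" using g2(1) e2 by (metis scale_scale)
  have fef: "f*(e-f) = 0" using ff fe by (simp add: algebra_simps)
  have z1: "scale f g2 = 0" using g2(1) fef by (metis scale_scale scale_zero_left)
  have z2: "scale (e-f) g1 = 0" using g1(1) fef by (metis scale_scale scale_zero_left mult.commute)
  have "scale e (g1+g2) = g1+g2" using e1 e2' by (simp add: scale_right_distrib)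
  moreover have "\<exists>c. w = scale c (g1+g2)" if w: "scale e w = w" for w
  proof -
    have "scale f (scale f w) = scale f w" using ff by simp
    then obtain c1 where c1: "scale f w = scale c1 g1" using g1(2) by blast
    have "(e-f)*(e-f) = e - f" using ee ff fe ef by (simp add: algebra_simps)
    then have "scale (e-f) (scale (e-f) w) = scale (e-f) w" by simp
    then obtain c2 where c2: "scale (e-f) w = scale c2 g2" using g2(2) by blast
    have "w = scale (f + (e-f)) w" using w by simp
    also have "\<dots> = scale c1 g1 + scale c2 g2" by (simp only: scale_left_distrib c1 c2)
    also have "\<dots> = scale (c1*f + c2*(e-f)) (g1+g2)"
    proof -
      have "scale (c1*f + c2*(e-f)) (g1+g2) = scale c1 (scale f g1) + scale c1 (scale f g2)
          + scale c2 (scale (e-f) g1) + scale c2 (scale (e-f) g2)"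
        by (simp add: scale_left_distrib scale_right_distrib)
      then show ?thesis using g1(1) g2(1) z1 z2 by simp
    qed
    finally show ?thesis by blast
  qed
  ultimately show ?thesis unfolding cyc_def by blast
qed

lemma local_case:
  fixes scale :: "'a::comm_ring_1 \<Rightarrow> 'b::ab_group_add \<Rightarrow> 'b"
  assumes mod: "module scale" and mm: "multiplication_module scale"
    and idem: "e*e = e"
    and D: "\<And>r. r*e = r \<Longrightarrow> nilp r \<or> (\<exists>u. r*u = e)"
  shows "cyc scale e"
proof -
  interpret module scale by fact
  have ideal_of: "\<exists>I. (\<forall>i\<in>I. \<forall>m. \<exists>c. scale i m = scale c z) \<and> z \<in> span {scale r m | r m. r \<in> I \<and> m \<in> UNIV}" for z
  proof -
    have "subspace (range (\<lambda>c. scale c z))"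
    proof (rule subspaceI)
      show "0 \<in> range (\<lambda>c. scale c z)" by (metis rangeI scale_zero_left)
      show "x + y \<in> range (\<lambda>c. scale c z)" if "x \<in> range (\<lambda>c. scale c z)" "y \<in> range (\<lambda>c. scale c z)" for x y
        using that by (auto simp: scale_left_distrib[symmetric])
      show "scale c x \<in> range (\<lambda>c. scale c z)" if "x \<in> range (\<lambda>c. scale c z)" for c x
        using that by auto
    qed
    then obtain I where eq: "range (\<lambda>c. scale c z) = ideal_smult scale I UNIV"
      using mm unfolding multiplication_module_def by blast
    have "\<forall>i\<in>I. \<forall>m. \<exists>c. scale i m = scale c z"
    proof (intro ballI allI)
      fix i m assume "i \<in> I"
      then have "scale i m \<in> ideal_smult scale I UNIV" unfolding ideal_smult_def
        by (intro span_base) blast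
      then show "\<exists>c. scale i m = scale c z" using eq by auto
    qed
    moreover have "z \<in> ideal_smult scale I UNIV" using eq[symmetric] by (metis rangeI scale_one)
    ultimately show ?thesis unfolding ideal_smult_def by blast
  qed
  show ?thesis
  proof (cases "\<exists>z k u. scale e z = z \<and> (\<forall>m. \<exists>c. scale k m = scale c z) \<and> (k*e)*u = e")
    case True
    then obtain z k u where z: "scale e z = z" "\<forall>m. \<exists>c. scale k m = scale c z" "(k*e)*u = e" by blast
    have "\<exists>c. w = scale c z" if "scale e w = w" for w
    proof -
      have "w = scale ((k*e)*u) w" using that z(3) by simp
      also have "\<dots> = scale k (scale (e*u) w)" by (simp add: mult.assoc)
      finally show ?thesis using z(2) by metis
    qed
    then show ?thesis using z(1) unfolding cyc_def by blast
  next
    case False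
    have nil: "nilp (k*e)" if "scale e z = z" "\<forall>m. \<exists>c. scale k m = scale c z" for z k
    proof -
      have "(k*e)*e = k*e" using idem by (simp add: mult.assoc)
      from D[OF this] False that show ?thesis by blast
    qed
    define G where "G = {scale a m | a m. nilp a}"
    have st1: "scale e w \<in> span G" for w
    proof -
      obtain I where I: "\<forall>i\<in>I. \<forall>m. \<exists>c. scale i m = scale c (scale e w)"
        and wI: "scale e w \<in> span {scale r m | r m. r \<in> I \<and> m \<in> UNIV}"
        using ideal_of by blast
      have ew: "scale e (scale e w) = scale e w" using idem by simp
      have "span {scale r m | r m. r \<in> I \<and> m \<in> UNIV} \<subseteq> {v. scale e v \<in> span G}"
      proof (rule span_minimal)
        show "{scale r m | r m. r \<in> I \<and> m \<in> UNIV} \<subseteq> {v. scale e v \<in> span G}"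
        proof clarify
          fix r m assume "r \<in> I"
          then have "nilp (r*e)" using nil[OF ew] I by blast
          then have "scale (r*e) m \<in> G" unfolding G_def by blast
          then show "scale e (scale r m) \<in> span G" by (simp add: span_base mult.commute)
        qed
        show "subspace {v. scale e v \<in> span G}"
        proof (rule subspaceI)
          show "0 \<in> {v. scale e v \<in> span G}" by (simp add: span_zero)
          show "x + y \<in> {v. scale e v \<in> span G}" if "x \<in> {v. scale e v \<in> span G}" "y \<in> {v. scale e v \<in> span G}" for x y
            using that by (simp add: scale_right_distrib span_add)
          show "scale c x \<in> {v. scale e v \<in> span G}" if "x \<in> {v. scale e v \<in> span G}" for c x
          proof -
            have "scale c (scale e x) \<in> span G" using that span_scale by blast
            then show ?thesis by (metis mem_Collect_eq scale_left_commute)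
          qed
        qed
      qed
      with wI ew show ?thesis by auto
    qed
    have zero: "z = 0" if ez: "scale e z = z" for z
    proof -
      have Sub: "subspace {v. \<exists>b. nilp b \<and> scale c v = scale b z}" for c
      proof (rule subspaceI)
        show "0 \<in> {v. \<exists>b. nilp b \<and> scale c v = scale b z}"
        proof -
          have "nilp (0::'a)" unfolding nilp_def by (rule exI[of _ 1]) simp
          then show ?thesis by force
        qed
        show "x + y \<in> {v. \<exists>b. nilp b \<and> scale c v = scale b z}"
          if hxy: "x \<in> {v. \<exists>b. nilp b \<and> scale c v = scale b z}" "y \<in> {v. \<exists>b. nilp b \<and> scale c v = scale b z}" for x y
        proof -
          obtain b1 b2 where "nilp b1" "scale c x = scale b1 z" "nilp b2" "scale c y = scale b2 z" using hxy by blast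
          then show ?thesis by (auto intro!: exI[of _ "b1+b2"] nilp_add simp: scale_right_distrib scale_left_distrib)
        qed
        show "scale c' x \<in> {v. \<exists>b. nilp b \<and> scale c v = scale b z}"
          if hx: "x \<in> {v. \<exists>b. nilp b \<and> scale c v = scale b z}" for c' x
        proof -
          obtain b where "nilp b" "scale c x = scale b z" using hx by blast
          then have "scale c (scale c' x) = scale (c'*b) z" by (metis scale_left_commute scale_scale)
          then show ?thesis using nilp_mult[OF \<open>nilp b\<close>, of c'] by blast
        qed
      qed
      obtain I where I: "\<forall>i\<in>I. \<forall>m. \<exists>c. scale i m = scale c z"
        and zI: "z \<in> span {scale r m | r m. r \<in> I \<and> m \<in> UNIV}"
        using ideal_of by blast
      have "span {scale r m | r m. r \<in> I \<and> m \<in> UNIV} \<subseteq> {v. \<exists>b. nilp b \<and> scale e v = scale b z}"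
      proof (rule span_minimal[OF _ Sub], clarify)
        fix i m assume iI: "i \<in> I"
        have "span G \<subseteq> {v. \<exists>b. nilp b \<and> scale i v = scale b z}"
        proof (rule span_minimal[OF _ Sub], rule subsetI)
          fix v assume "v \<in> G"
          then obtain a m' where "nilp a" and v: "v = scale a m'" unfolding G_def by blast
          obtain c where "scale i m' = scale c z" using I iI by blast
          then have "scale i (scale a m') = scale (a*c) z" by (metis scale_left_commute scale_scale)
          then have "scale i v = scale (c*a) z" using v by (simp add: mult.commute)
          moreover have "nilp (c*a)" using nilp_mult[OF \<open>nilp a\<close>, of c] .
          ultimately show "v \<in> {v. \<exists>b. nilp b \<and> scale i v = scale b z}" by blast
        qed
        then obtain b where "nilp b" "scale i (scale e m) = scale b z" using st1[of m] by blast
        then show "\<exists>b. nilp b \<and> scale e (scale i m) = scale b z" by (metis scale_left_commute)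
      qed
      with zI obtain b where b: "nilp b" "scale e z = scale b z" by blast
      then obtain n where n: "b^n = 0" unfolding nilp_def by blast
      have "z = scale (b^k) z" for k
      proof (induction k)
        case 0 then show ?case by simp
      next
        case (Suc k)
        have "scale (b^Suc k) z = scale b (scale (b^k) z)" by simp
        also have "\<dots> = scale b z" using Suc by simp
        finally show ?case using b(2) ez by simp
      qed
      from this[of n] n show ?thesis by simp
    qed
    have "scale e 0 = 0" by simp
    moreover have "\<exists>c. w = scale c 0" if "scale e w = w" for w using zero[OF that] by simp
    ultimately show ?thesis unfolding cyc_def by blast
  qed
qed


theorem corollary2p5:
  fixes scale :: "'a::comm_ring_1 \<Rightarrow> 'b::ab_group_add \<Rightarrow> 'b"
  assumes "artinian_ring TYPE('a)"
    and "multiplication_ring TYPE('a)"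
    and "module scale"
    and "multiplication_module scale"
  shows "\<exists>f. module_hom ((*) :: 'a \<Rightarrow> 'a \<Rightarrow> 'a) scale f \<and> surj f"
proof -
  interpret module scale by fact
  have "cyc scale (1::'a)"
  proof (rule ccontr)
    assume n1: "\<not> cyc scale (1::'a)"
    define F where "F = {{e*t | t. True} | e::'a. e*e = e \<and> \<not> cyc scale e}"
    have "{(1::'a)*t | t. True} \<in> F" using n1 unfolding F_def
      by (intro CollectI exI[of _ 1]) simp
    moreover have "\<forall>J\<in>F. is_ideal J" using principal_ideal unfolding F_def by blast
    ultimately obtain I where "I \<in> F" and min: "\<forall>J\<in>F. J \<subseteq> I \<longrightarrow> J = I"
      using artinian_min[OF assms(1)] by blast
    then obtain e where Ie: "I = {e*t|t. True}" "e*e = e" "\<not> cyc scale e" unfolding F_def by blast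
    have D: "nilp r \<or> (\<exists>u. r*u = e)" if re: "r*e = r" for r
    proof -
      obtain n s where "n\<ge>1" "r^n = r^(n+1)*s" using pi_regular[OF assms(1)] by blast
      then obtain f u where f: "f*f = f" "f = r*u" "r^n = f*r^n" using pi_idem by blast
      consider "f = 0" | "f = e" | "f \<noteq> 0" "f \<noteq> e" by blast
      then show ?thesis
      proof cases
        case 1 then show ?thesis using f(3) unfolding nilp_def by auto
      next
        case 2 then show ?thesis using f(2) by blast
      next
        case 3
        have fe: "f*e = f" using f(2) re by (metis mult.assoc mult.commute)
        have sub: "{g*t|t. True} \<subseteq> I" if "g*e = g" for g
        proof
          fix x assume "x \<in> {g*t|t. True}"
          then obtain t where "x = g*t" by blast
          then have "x = e*(g*t)" using that by (metis mult.assoc mult.commute)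
          then show "x \<in> I" using Ie(1) by blast
        qed
        have Pf: "cyc scale f"
        proof (rule ccontr)
          assume "\<not> cyc scale f"
          then have "{f*t|t. True} \<in> F" using f(1) unfolding F_def by blast
          with min sub[OF fe] have "{f*t|t. True} = I" by blast
          then have "e \<in> {f*t|t. True}" using Ie(1) by (metis (mono_tags) mem_Collect_eq mult_1_right)
          then obtain t where "e = f*t" by blast
          then have "f*e = e" using f(1) by (metis mult.assoc)
          with fe 3 show False by simp
        qed
        have ef1: "(e-f)*(e-f) = e-f" using Ie(2) f(1) fe by (simp add: algebra_simps)
        have ef2: "(e-f)*e = e-f" using Ie(2) fe by (simp add: algebra_simps)
        have Pef: "cyc scale (e-f)"
        proof (rule ccontr)
          assume "\<not> cyc scale (e-f)"
          then have "{(e-f)*t|t. True} \<in> F" using ef1 unfolding F_def by blast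
          with min sub[OF ef2] have "{(e-f)*t|t. True} = I" by blast
          then have "e \<in> {(e-f)*t|t. True}" using Ie(1) by (metis (mono_tags) mem_Collect_eq mult_1_right)
          then obtain t where "e = (e-f)*t" by blast
          then have "f*e = (f*(e-f))*t" by (simp add: mult.assoc)
          also have "f*(e-f) = 0" using f(1) fe by (simp add: algebra_simps)
          finally show False using fe 3 by simp
        qed
        have "cyc scale e" using cyc_split[OF assms(3) Ie(2) f(1) fe Pf Pef] .
        with Ie(3) show ?thesis by blast
      qed
    qed
    have "cyc scale e" using local_case[OF assms(3) assms(4) Ie(2)] D by blast
    with Ie(3) show False by blast
  qed
  then obtain g where g: "\<And>w. \<exists>c. w = scale c g" unfolding cyc_def by auto
  have "module_hom ((*) :: 'a \<Rightarrow> 'a \<Rightarrow> 'a) scale (\<lambda>c. scale c g)" by simp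
  moreover have "surj (\<lambda>c. scale c g)" using g by blast
  ultimately show ?thesis by blast
qed

end
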